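(* Let $\langle c^m,c^M\rangle$ be a cell of size $n$ and $i\in[n-1]$. (i) If $c^m_i<0$ then $c^M_i\leq 0$. (ii) If $c^m_i\geq 0$ then $c^M_i>0$.
   Context: A Tamari diagram of size $n$ is a word $u=u_1\cdots u_n$ of integers with $0\leq u_i\leq n-i$ and $u_{i+j}\leq u_i-j$ for all $i\in[n]$, $0\leq j\leq u_i$. A dual Tamari diagram of size $n$ is a word $v$ of integers with $0\leq v_i\leq i-1$ and $v_{i-j}\leq v_i-j$ for all $i\in[n]$, $0\leq j\leq v_i$. $(u,v)$ is a Tamari interval diagram if moreover for all $1\leq i<j\leq n$ with $j-i\leq u_i$ one has $v_j<j-i$. A cubic coordinate of size $n$ is $c\in\mathbb{Z}^{n-1}$ such that $(u,v)$ with $u_i=\max(c_i,0)$ ($i\in[n-1]$), $u_n=0$, $v_1=0$, $v_i=|\min(c_{i-1},0)|$ ($2\leq i\leq n$) is a Tamari interval diagram. For a cubic coordinate $c$ and $i\in[n-1]$, the minimal increase $\uparrow_i(c)$ is defined when there exists a cubic coordinate agreeing with $c$ outside position $i$ and with $i$-th entry $>c_i$; then $\uparrow_i(c)$ is obtained from $c$ by replacing $c_i$ by the smallest integer $t>c_i$ such that the result is a cubic coordinate. $c$ is minimal-cellular if $\uparrow_i(c)$ is defined for all $i\in[n-1]$. A cell of size $n$ is a pair $\langle c^m,c^M\rangle$ where $c^m$ is a minimal-cellular cubic coordinate of size $n$ and $c^M=\uparrow_1(\uparrow_2(\cdots(\uparrow_{n-1}(c^m))\cdots))$ (every step of this composition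 is defined). *)

theory Defs
  imports Main
begin

(* Words are 1-indexed functions nat => int; only positions 1..n matter. *)

definition tamari_diagram :: "nat \<Rightarrow> (nat \<Rightarrow> int) \<Rightarrow> bool" where
  "tamari_diagram n u \<longleftrightarrow>
     (\<forall>i\<in>{1..n}. 0 \<le> u i \<and> u i \<le> int (n - i) \<and>
        (\<forall>j::nat. int j \<le> u i \<longrightarrow> u (i + j) \<le> u i - int j))"

definition dual_tamari_diagram :: "nat \<Rightarrow> (nat \<Rightarrow> int) \<Rightarrow> bool" where
  "dual_tamari_diagram n v \<longleftrightarrow>
     (\<forall>i\<in>{1..n}. 0 \<le> v i \<and> v i \<le> int i - 1 \<and>
        (\<forall>j::nat. int j \<le> v i \<longrightarrow> v (i - j) \<le> v i - int j))"

definition tamari_interval_diagram :: "nat \<Rightarrow> (nat \<Rightarrow> int) \<Rightarrow> (nat \<Rightarrow> int) \<Rightarrow> bool" where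
  "tamari_interval_diagram n u v \<longleftrightarrow>
     tamari_diagram n u \<and> dual_tamari_diagram n v \<and>
     (\<forall>i j. 1 \<le> i \<and> i < j \<and> j \<le> n \<and> int (j - i) \<le> u i \<longrightarrow> v j < int (j - i))"

(* A cubic coordinate of size n is a list c of length n-1; c_i = c ! (i-1). *)
definition cubic_coord :: "nat \<Rightarrow> int list \<Rightarrow> bool" where
  "cubic_coord n c \<longleftrightarrow> length c = n - 1 \<and>
     tamari_interval_diagram n
       (\<lambda>i. if 1 \<le> i \<and> i \<le> n - 1 then max (c ! (i - 1)) 0 else 0)
       (\<lambda>i. if 2 \<le> i \<and> i \<le> n then \<bar>min (c ! (i - 2)) 0\<bar> else 0)"

definition inc_defined :: "nat \<Rightarrow> int list \<Rightarrow> nat \<Rightarrow> bool" where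
  "inc_defined n c i \<longleftrightarrow> (\<exists>t. t > c ! (i - 1) \<and> cubic_coord n (c[i - 1 := t]))"

definition min_inc :: "nat \<Rightarrow> int list \<Rightarrow> nat \<Rightarrow> int list" where
  "min_inc n c i = c[i - 1 := (LEAST t. t > c ! (i - 1) \<and> cubic_coord n (c[i - 1 := t]))]"

definition minimal_cellular :: "nat \<Rightarrow> int list \<Rightarrow> bool" where
  "minimal_cellular n c \<longleftrightarrow> cubic_coord n c \<and> (\<forall>i\<in>{1..n-1}. inc_defined n c i)"

(* up_1(up_2(...(up_{n-1}(c))...)) *)
definition up_all :: "nat \<Rightarrow> int list \<Rightarrow> int list" where
  "up_all n c = foldr (\<lambda>i d. min_inc n d i) [1..<n] c"

definition is_cell :: "nat \<Rightarrow> int list \<Rightarrow> int list \<Rightarrow> bool" where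
  "is_cell n cm cM \<longleftrightarrow> minimal_cellular n cm \<and>
     (\<forall>k\<in>{1..n-1}. inc_defined n (foldr (\<lambda>i d. min_inc n d i) [k+1..<n] cm) k) \<and>
     cM = up_all n cm"

end

theory Submission
  imports Defs
begin

lemma td_mono:
  assumes "tamari_diagram n u" "\<And>i. 0 \<le> u' i" "\<And>i. u' i \<le> u i" "\<And>i. u' i = u i \<or> u' i = 0"
  shows "tamari_diagram n u'"
  unfolding tamari_diagram_def
proof (intro ballI conjI allI impI)
  fix i assume i: "i \<in> {1..n}"
  show "0 \<le> u' i" by fact
  show "u' i \<le> int (n - i)" using assms(1,3) i unfolding tamari_diagram_def by (meson order_trans)
  fix j :: nat assume j: "int j \<le> u' i"
  show "u' (i + j) \<le> u' i - int j"
  proof (cases "u' i = 0")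
    case True then have "j = 0" using j by simp
    then show ?thesis by simp
  next
    case False then have "u' i = u i" using assms(4) by metis
    then show ?thesis using assms(1,3) i j unfolding tamari_diagram_def
      by (metis order_trans)
  qed
qed

lemma dtd_mono:
  assumes "dual_tamari_diagram n u" "\<And>i. 0 \<le> u' i" "\<And>i. u' i \<le> u i" "\<And>i. u' i = u i \<or> u' i = 0"
  shows "dual_tamari_diagram n u'"
  unfolding dual_tamari_diagram_def
proof (intro ballI conjI allI impI)
  fix i assume i: "i \<in> {1..n}"
  show "0 \<le> u' i" by fact
  show "u' i \<le> int i - 1" using assms(1,3) i unfolding dual_tamari_diagram_def by (meson order_trans)
  fix j :: nat assume j: "int j \<le> u' i"
  show "u' (i - j) \<le> u' i - int j"
  proof (cases "u' i = 0")
    case True then have "j = 0" using j by simp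
    then show ?thesis by simp
  next
    case False then have "u' i = u i" using assms(4) by metis
    then show ?thesis using assms(1,3) i j unfolding dual_tamari_diagram_def
      by (metis order_trans)
  qed
qed

lemma zero_cubic:
  assumes "cubic_coord n c" "k < length c"
  shows "cubic_coord n (c[k := 0])"
proof -
  define u where "u = (\<lambda>i. if 1 \<le> i \<and> i \<le> n - 1 then max (c ! (i - 1)) 0 else 0)"
  define v where "v = (\<lambda>i. if 2 \<le> i \<and> i \<le> n then \<bar>min (c ! (i - 2)) (0::int)\<bar> else 0)"
  define u' where "u' = (\<lambda>i. if 1 \<le> i \<and> i \<le> n - 1 then max (c[k:=0] ! (i - 1)) 0 else 0)"
  define v' where "v' = (\<lambda>i. if 2 \<le> i \<and> i \<le> n then \<bar>min (c[k:=0] ! (i - 2)) (0::int)\<bar> else 0)"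
  have L: "length c = n - 1" using assms(1) unfolding cubic_coord_def by simp
  have T: "tamari_interval_diagram n u v" using assms(1) unfolding cubic_coord_def u_def v_def by simp
  have u1: "0 \<le> u' i" "u' i \<le> u i" "u' i = u i \<or> u' i = 0" for i
    unfolding u'_def u_def using assms(2) L
    by (auto simp: nth_list_update)
  have v1: "0 \<le> v' i" "v' i \<le> v i" "v' i = v i \<or> v' i = 0" for i
    unfolding v'_def v_def using assms(2) L
    by (auto simp: nth_list_update)
  have "tamari_interval_diagram n u' v'"
    unfolding tamari_interval_diagram_def
  proof (intro conjI)
    show "tamari_diagram n u'" using T td_mono u1 unfolding tamari_interval_diagram_def by blast
    show "dual_tamari_diagram n v'" using T dtd_mono v1 unfolding tamari_interval_diagram_def by blast
    show "\<forall>i j. 1 \<le> i \<and> i < j \<and> j \<le> n \<and> int (j - i) \<le> u' i \<longrightarrow> v' j < int (j - i)"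
      using T u1(2) v1(2) unfolding tamari_interval_diagram_def
      by (meson order_trans le_less_trans)
  qed
  then show ?thesis unfolding cubic_coord_def u'_def v'_def using L by simp
qed

lemma foldr_nth_keep:
  assumes "\<forall>x\<in>set xs. x - 1 \<noteq> p"
  shows "foldr (\<lambda>i d. min_inc n d i) xs c ! p = c ! p"
  using assms by (induction xs) (auto simp: min_inc_def)

lemma foldr_len:
  "length (foldr (\<lambda>i d. min_inc n d i) xs c) = length c"
  by (induction xs) (auto simp: min_inc_def)

lemma least_int:
  fixes P :: "int \<Rightarrow> bool" and a :: int
  assumes "P t" "\<And>t. P t \<Longrightarrow> a < t"
  shows "\<exists>m. P m \<and> (\<forall>y. P y \<longrightarrow> m \<le> y)"
proof -
  define Q where "Q k = P (a + 1 + int k)" for k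
  have "a < t" using assms by blast
  then have "Q (nat (t - a - 1))" using assms unfolding Q_def by simp
  then obtain k where k: "Q k" "\<And>k'. Q k' \<Longrightarrow> k \<le> k'" by (metis LeastI Least_le)
  show ?thesis
  proof (intro exI conjI allI impI)
    show "P (a + 1 + int k)" using k(1) Q_def by simp
    fix y assume "P y"
    then have "a < y" using assms(2) by blast
    then have "Q (nat (y - a - 1))" using \<open>P y\<close> unfolding Q_def by simp
    then have "k \<le> nat (y - a - 1)" using k(2) by blast
    then show "a + 1 + int k \<le> y" using \<open>a < y\<close> by linarith
  qed
qed

theorem lemma4p6:
  fixes n i :: nat and cm cM :: "int list"
  assumes "is_cell n cm cM" and "1 \<le> i" and "i \<le> n - 1"
  shows "(cm ! (i - 1) < 0 \<longrightarrow> cM ! (i - 1) \<le> 0) \<and>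
         (cm ! (i - 1) \<ge> 0 \<longrightarrow> cM ! (i - 1) > 0)"
proof -
  let ?f = "\<lambda>i d. min_inc n d i"
  define d where "d = foldr ?f [i+1..<n] cm"
  have L: "length cm = n - 1" using assms(1) unfolding is_cell_def minimal_cellular_def cubic_coord_def by simp
  have Ld: "length d = n - 1" using L foldr_len unfolding d_def by metis
  have inc: "inc_defined n d i" using assms unfolding is_cell_def d_def by auto
  have di: "d ! (i - 1) = cm ! (i - 1)" unfolding d_def
    by (rule foldr_nth_keep) (use assms(2) in auto)
  have split: "[1..<n] = [1..<i] @ [i..<n]" using assms(2,3)
    using upt_add_eq_append[of 1 i "n - i"] by simp
  have upt: "[i..<n] = i # [i+1..<n]" using assms(2,3) by (simp add: upt_rec)
  have "cM = foldr ?f [1..<i] (foldr ?f [i..<n] cm)"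
    using assms(1) unfolding is_cell_def up_all_def split by simp
  then have "cM ! (i - 1) = foldr ?f [i..<n] cm ! (i - 1)"
    using foldr_nth_keep[of "[1..<i]" "i - 1" n "foldr ?f [i..<n] cm"] by fastforce
  also have "\<dots> = min_inc n d i ! (i - 1)" using upt d_def by simp
  finally have cMi: "cM ! (i - 1) = (LEAST t. t > d ! (i - 1) \<and> cubic_coord n (d[i - 1 := t]))"
    unfolding min_inc_def using Ld assms(2,3) by simp
  let ?P = "\<lambda>t. t > d ! (i - 1) \<and> cubic_coord n (d[i - 1 := t])"
  obtain t0 where t0: "?P t0" using inc unfolding inc_defined_def by blast
  obtain m where m: "?P m" "\<And>y. ?P y \<Longrightarrow> m \<le> y"
    using least_int[of ?P t0 "d ! (i - 1)"] t0 by blast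
  have Lm: "(LEAST t. ?P t) = m" by (rule Least_equality) (use m in auto)
  have z: "cubic_coord n (d[i - 1 := 0])"
  proof -
    have "cubic_coord n ((d[i - 1 := t0])[i - 1 := 0])"
      by (rule zero_cubic) (use t0 Ld assms(2,3) in auto)
    then show ?thesis by simp
  qed
  show ?thesis
  proof (intro conjI impI)
    assume "cm ! (i - 1) < 0"
    then have "?P 0" using z di by simp
    then show "cM ! (i - 1) \<le> 0" using m(2) cMi Lm by simp
  next
    assume "cm ! (i - 1) \<ge> 0"
    then show "cM ! (i - 1) > 0" using m(1) cMi Lm di by simp
  qed
qed

end
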